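(* Let $R$ be a commutative ring with identity and let $p_0, p_{11}, p_{12}, p_{21}, p_{22}\in R$ be such that $p_0$ divides $p_{11}p_{22}$, $p_{21}$ divides $p_{11}p_{12}$, and $p_{12}$ divides $p_{21}p_{22}$. Set $p_1=p_{11}+p_{12}$ and $p_2=p_{21}+p_{22}$. Then $$\sqrt{(p_0,p_1,p_2)}=\sqrt{(p_0,p_{11},p_{12},p_{21},p_{22})}.$$
   Context: For an ideal $J$ of $R$, $\sqrt{J}$ denotes its radical; $(a_1,\dots,a_k)$ denotes the ideal generated by $a_1,\dots,a_k$. *)

theory Defs
  imports "HOL-Algebra.Algebra"
begin

definition radical :: "('a, 'b) ring_scheme \<Rightarrow> 'a set \<Rightarrow> 'a set" where
  "radical R J = {x \<in> carrier R. \<exists>n::nat. x [^]\<^bsub>R\<^esub> n \<in> J}"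

end

theory Submission
  imports Defs
begin

lemma (in cring) rad_add_aux:
  assumes I: "ideal I R" and x: "x \<in> carrier R" and y: "y \<in> carrier R"
    and xm: "x [^] (m::nat) \<in> I" and yn: "y [^] (n::nat) \<in> I"
  shows "\<forall>i j. m + n \<le> i + j + k \<longrightarrow> x [^] i \<otimes> y [^] j \<otimes> (x \<oplus> y) [^] k \<in> I"
proof (induction k)
  case 0
  show ?case
  proof (intro allI impI)
    fix i j :: nat assume h: "m + n \<le> i + j + 0"
    then have "m \<le> i \<or> n \<le> j" by arith
    then show "x [^] i \<otimes> y [^] j \<otimes> (x \<oplus> y) [^] (0::nat) \<in> I"
    proof
      assume "m \<le> i"
      then have "x [^] i = x [^] m \<otimes> x [^] (i - m)"
        using x by (simp add: nat_pow_mult)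
      then have "x [^] i \<in> I" using ideal.I_r_closed[OF I xm] x by simp
      then show ?thesis using ideal.I_r_closed[OF I] x y by simp
    next
      assume "n \<le> j"
      then have "y [^] j = y [^] n \<otimes> y [^] (j - n)"
        using y by (simp add: nat_pow_mult)
      then have "y [^] j \<in> I" using ideal.I_r_closed[OF I yn] y by simp
      then show ?thesis using ideal.I_l_closed[OF I] x y by simp
    qed
  qed
next
  case (Suc k)
  show ?case
  proof (intro allI impI)
    fix i j :: nat assume h: "m + n \<le> i + j + Suc k"
    have "m + n \<le> Suc i + j + k" using h by simp
    then have a: "x [^] Suc i \<otimes> y [^] j \<otimes> (x \<oplus> y) [^] k \<in> I" using Suc.IH by blast
    have "m + n \<le> i + Suc j + k" using h by simp
    then have b: "x [^] i \<otimes> y [^] Suc j \<otimes> (x \<oplus> y) [^] k \<in> I" using Suc.IH by blast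
    have "x [^] i \<otimes> y [^] j \<otimes> (x \<oplus> y) [^] Suc k
        = x [^] Suc i \<otimes> y [^] j \<otimes> (x \<oplus> y) [^] k \<oplus> x [^] i \<otimes> y [^] Suc j \<otimes> (x \<oplus> y) [^] k"
      using x y by (simp add: nat_pow_Suc2 m_ac r_distr l_distr)
    then show "x [^] i \<otimes> y [^] j \<otimes> (x \<oplus> y) [^] Suc k \<in> I"
      using a b ideal.axioms(1)[OF I] additive_subgroup.a_closed by metis
  qed
qed

lemma (in cring) radical_ideal:
  assumes I: "ideal I R"
  shows "ideal (radical R I) R"
proof (rule idealI)
  show "ring R" by (rule ring_axioms)
  have sub: "radical R I \<subseteq> carrier R" unfolding radical_def by auto
  show "subgroup (radical R I) (add_monoid R)"
  proof (rule add.subgroupI)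
    show "radical R I \<subseteq> carrier R" using sub by simp
    have "\<zero> \<in> I" using additive_subgroup.zero_closed[OF ideal.axioms(1)[OF I]] by simp
    then have "\<zero> [^] (1::nat) \<in> I" by simp
    then show "radical R I \<noteq> {}" unfolding radical_def by blast
  next
    fix a assume a: "a \<in> radical R I"
    then obtain n where an: "a \<in> carrier R" "a [^] (n::nat) \<in> I" unfolding radical_def by auto
    have "\<ominus> a = (\<ominus> \<one>) \<otimes> a" using an by (simp add: l_minus)
    then have "(\<ominus> a) [^] n = (\<ominus> \<one>) [^] n \<otimes> a [^] n" using an by (simp add: nat_pow_distrib)
    then have "(\<ominus> a) [^] n \<in> I" using ideal.I_l_closed[OF I an(2)] by simp
    then show "\<ominus> a \<in> radical R I" unfolding radical_def
      using an by auto
  next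
    fix a b assume a: "a \<in> radical R I" and b: "b \<in> radical R I"
    then obtain m n where am: "a \<in> carrier R" "a [^] (m::nat) \<in> I"
      and bn: "b \<in> carrier R" "b [^] (n::nat) \<in> I" unfolding radical_def by auto
    have cc: "(a \<oplus> b) [^] (m + n) \<in> carrier R" using am bn by simp
    have "a [^] (0::nat) \<otimes> b [^] (0::nat) \<otimes> (a \<oplus> b) [^] (m + n) \<in> I"
      using rad_add_aux[OF I am(1) bn(1) am(2) bn(2), of "m+n", rule_format, of 0 0] by simp
    then have "(a \<oplus> b) [^] (m + n) \<in> I" using cc am bn by simp
    then show "a \<oplus> b \<in> radical R I" unfolding radical_def using am bn by auto
  qed
next
  fix a x assume a: "a \<in> radical R I" and x: "x \<in> carrier R"
  then obtain n where an: "a \<in> carrier R" "a [^] (n::nat) \<in> I" unfolding radical_def by auto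
  have "(x \<otimes> a) [^] n = x [^] n \<otimes> a [^] n" using an x by (simp add: nat_pow_distrib)
  then have "(x \<otimes> a) [^] n \<in> I" using ideal.I_l_closed[OF I an(2)] x by simp
  then show "x \<otimes> a \<in> radical R I" unfolding radical_def using an x by auto
  then show "a \<otimes> x \<in> radical R I" using an x by (simp add: m_comm)
qed

theorem proposition1:
  fixes R (structure)
  assumes "cring R"
    and "p0 \<in> carrier R" "p11 \<in> carrier R" "p12 \<in> carrier R"
    and "p21 \<in> carrier R" "p22 \<in> carrier R"
    and "p0 divides\<^bsub>R\<^esub> (p11 \<otimes>\<^bsub>R\<^esub> p22)"
    and "p21 divides\<^bsub>R\<^esub> (p11 \<otimes>\<^bsub>R\<^esub> p12)"
    and "p12 divides\<^bsub>R\<^esub> (p21 \<otimes>\<^bsub>R\<^esub> p22)"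
  shows "radical R (Idl\<^bsub>R\<^esub> {p0, p11 \<oplus>\<^bsub>R\<^esub> p12, p21 \<oplus>\<^bsub>R\<^esub> p22})
       = radical R (Idl\<^bsub>R\<^esub> {p0, p11, p12, p21, p22})"
proof -
  interpret cring R by fact
  note c = assms(2-6)
  define I where "I = Idl {p0, p11 \<oplus> p12, p21 \<oplus> p22}"
  define J where "J = Idl {p0, p11, p12, p21, p22}"
  have Iid: "ideal I R" unfolding I_def using c by (intro genideal_ideal) auto
  have Jid: "ideal J R" unfolding J_def using c by (intro genideal_ideal) auto
  have p0I: "p0 \<in> I" and p1I: "p11 \<oplus> p12 \<in> I" and p2I: "p21 \<oplus> p22 \<in> I"
    unfolding I_def using c genideal_self[of "{p0, p11 \<oplus> p12, p21 \<oplus> p22}"] by auto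
  have IJ: "I \<subseteq> J" unfolding I_def
  proof (rule genideal_minimal[OF Jid])
    have "p0 \<in> J" "p11 \<in> J" "p12 \<in> J" "p21 \<in> J" "p22 \<in> J"
      unfolding J_def using c genideal_self[of "{p0, p11, p12, p21, p22}"] by auto
    then show "{p0, p11 \<oplus> p12, p21 \<oplus> p22} \<subseteq> J"
      using additive_subgroup.a_closed[OF ideal.axioms(1)[OF Jid]] by auto
  qed
  obtain e where e: "e \<in> carrier R" "p11 \<otimes> p22 = p0 \<otimes> e" using assms(7) unfolding factor_def by auto
  obtain f where f: "f \<in> carrier R" "p11 \<otimes> p12 = p21 \<otimes> f" using assms(8) unfolding factor_def by auto
  obtain d where d: "d \<in> carrier R" "p21 \<otimes> p22 = p12 \<otimes> d" using assms(9) unfolding factor_def by auto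
  have Ic: "\<And>a b. a \<in> I \<Longrightarrow> b \<in> I \<Longrightarrow> a \<oplus> b \<in> I"
    using additive_subgroup.a_closed[OF ideal.axioms(1)[OF Iid]] by blast
  have In: "\<And>a. a \<in> I \<Longrightarrow> \<ominus> a \<in> I"
    using additive_subgroup.a_inv_closed[OF ideal.axioms(1)[OF Iid]] by blast
  have Il: "\<And>a x. a \<in> I \<Longrightarrow> x \<in> carrier R \<Longrightarrow> x \<otimes> a \<in> I"
    using ideal.I_l_closed[OF Iid] by blast
  have e1: "p11 [^] (3::nat) = p11 \<otimes> p11 \<otimes> (p11 \<oplus> p12) \<oplus> \<ominus> (f \<otimes> p11 \<otimes> (p21 \<oplus> p22)) \<oplus> (f \<otimes> e) \<otimes> p0"
  proof -
    have "p11 [^] (3::nat) = p11 \<otimes> p11 \<otimes> p11" using c by (simp add: numeral_3_eq_3)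
    also have "\<dots> = p11 \<otimes> p11 \<otimes> (p11 \<oplus> p12) \<oplus> \<ominus> (f \<otimes> p11 \<otimes> (p21 \<oplus> p22)) \<oplus> (f \<otimes> e) \<otimes> p0"
      using c f e by algebra
    finally show ?thesis .
  qed
  have e2: "p21 [^] (3::nat) = p21 \<otimes> p21 \<otimes> (p21 \<oplus> p22) \<oplus> \<ominus> (d \<otimes> p21 \<otimes> (p11 \<oplus> p12)) \<oplus> d \<otimes> p11 \<otimes> (p21 \<oplus> p22) \<oplus> \<ominus> (d \<otimes> e \<otimes> p0)"
  proof -
    have "p21 [^] (3::nat) = p21 \<otimes> p21 \<otimes> p21" using c by (simp add: numeral_3_eq_3)
    also have "\<dots> = p21 \<otimes> p21 \<otimes> (p21 \<oplus> p22) \<oplus> \<ominus> (d \<otimes> p21 \<otimes> (p11 \<oplus> p12)) \<oplus> d \<otimes> p11 \<otimes> (p21 \<oplus> p22) \<oplus> \<ominus> (d \<otimes> e \<otimes> p0)"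
      using c d e by algebra
    finally show ?thesis .
  qed
  have p11c: "p11 [^] (3::nat) \<in> I" unfolding e1
    using c e f p0I p1I p2I by (intro Ic In Il[OF p0I] Il[OF p1I] Il[OF p2I]) auto
  have p21c: "p21 [^] (3::nat) \<in> I" unfolding e2
    using c e d p0I p1I p2I by (intro Ic In Il[OF p0I] Il[OF p1I] Il[OF p2I]) auto
  define RI where "RI = radical R I"
  have RIid: "ideal RI R" unfolding RI_def by (rule radical_ideal[OF Iid])
  have IRI: "I \<subseteq> RI" unfolding RI_def radical_def
  proof
    fix x assume "x \<in> I"
    moreover then have "x \<in> carrier R" using ideal.Icarr[OF Iid] by blast
    ultimately show "x \<in> {x \<in> carrier R. \<exists>n::nat. x [^] n \<in> I}"
      by (auto intro: exI[of _ "1::nat"])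
  qed
  have RIc: "\<And>a b. a \<in> RI \<Longrightarrow> b \<in> RI \<Longrightarrow> a \<oplus> b \<in> RI"
    using additive_subgroup.a_closed[OF ideal.axioms(1)[OF RIid]] by blast
  have RIn: "\<And>a. a \<in> RI \<Longrightarrow> \<ominus> a \<in> RI"
    using additive_subgroup.a_inv_closed[OF ideal.axioms(1)[OF RIid]] by blast
  have r11: "p11 \<in> RI" unfolding RI_def radical_def using c p11c by blast
  have r21: "p21 \<in> RI" unfolding RI_def radical_def using c p21c by blast
  have r12: "p12 \<in> RI"
  proof -
    have "p12 = \<ominus> p11 \<oplus> (p11 \<oplus> p12)" using c by algebra
    moreover have "p11 \<oplus> p12 \<in> RI" using p1I IRI by blast
    then have "\<ominus> p11 \<oplus> (p11 \<oplus> p12) \<in> RI" using RIc RIn r11 by blast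
    ultimately show ?thesis by simp
  qed
  have r22: "p22 \<in> RI"
  proof -
    have "p22 = \<ominus> p21 \<oplus> (p21 \<oplus> p22)" using c by algebra
    moreover have "p21 \<oplus> p22 \<in> RI" using p2I IRI by blast
    then have "\<ominus> p21 \<oplus> (p21 \<oplus> p22) \<in> RI" using RIc RIn r21 by blast
    ultimately show ?thesis by simp
  qed
  have JRI: "J \<subseteq> RI" unfolding J_def
    by (rule genideal_minimal[OF RIid]) (use r11 r12 r21 r22 p0I IRI in auto)
  show ?thesis unfolding I_def[symmetric] J_def[symmetric]
  proof
    show "radical R I \<subseteq> radical R J" unfolding radical_def using IJ by blast
    show "radical R J \<subseteq> radical R I"
    proof
      fix x assume "x \<in> radical R J"
      then obtain n where x: "x \<in> carrier R" "x [^] (n::nat) \<in> J" unfolding radical_def by auto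
      then have "x [^] n \<in> RI" using JRI by blast
      then obtain m where "(x [^] n) [^] (m::nat) \<in> I" unfolding RI_def radical_def by auto
      then have "x [^] (n * m) \<in> I" using x by (simp add: nat_pow_pow)
      then show "x \<in> radical R I" unfolding radical_def using x by blast
    qed
  qed
qed

end
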